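(* Consider the $r$-cGA with parameter $K$ on $r\text{-OneMax}$, with frequencies $p^{(t)}_{i,j}$ at iteration $t$, and let $\Delta_{i,r-1}:=p^{(t+1)}_{i,r-1}-p^{(t)}_{i,r-1}$. If $\frac1K\leq p^{(t)}_{i,r-1}\leq 1-\frac1K$, then, conditional on the frequencies at iteration $t$, \[\mathbb{E}(\Delta_{i,r-1}\mid p^{(t)})\geq \frac{8\,p^{(t)}_{i,r-1}(1-p^{(t)}_{i,r-1})}{9K\left(2\sqrt{3\sum_{j\neq i}p^{(t)}_{j,r-1}(1-p^{(t)}_{j,r-1})}+1\right)}.\]
   Context: Let $n\geq 1$, $r\geq 2$ be integers and $K>0$. The $r$-cGA maximizing $f$ maintains frequencies $p^{(t)}_{i,j}$ ($i\in\{1,\dots,n\}$, $j\in\{0,\dots,r-1\}$), initialized to $1/r$. In iteration $t$ it samples $x,y\in\{0,\dots,r-1\}^n$ independently, each position $i$ independently with $\Pr[x_i=j]=p^{(t)}_{i,j}$; if $f(x)<f(y)$ it swaps $x$ and $y$; then it sets $p^{(t+1)}_{i,j}=p^{(t)}_{i,j}+\frac1K(\mathbf{1}[x_i=j]-\mathbf{1}[y_i=j])$ for all $i,j$, with no margins. Here $f=r\text{-OneMax}$, $r\text{-OneMax}(x)=\sum_{i=1}^n\mathbf{1}[x_i=r-1]$. *)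

theory Defs
  imports "HOL-Probability.Probability"
begin

text \<open>Positions are indexed 0..n-1, values 0..r-1. A frequency state is
  p :: nat => nat => real, p i j = frequency of value j at position i.\<close>

definition r_onemax :: "nat \<Rightarrow> nat \<Rightarrow> (nat \<Rightarrow> nat) \<Rightarrow> nat" where
  "r_onemax r n x = card {i \<in> {..<n}. x i = r - 1}"

definition valid_freqs :: "nat \<Rightarrow> nat \<Rightarrow> (nat \<Rightarrow> nat \<Rightarrow> real) \<Rightarrow> bool" where
  "valid_freqs r n p \<longleftrightarrow> (\<forall>i<n. (\<forall>j<r. p i j \<ge> 0) \<and> (\<Sum>j<r. p i j) = 1)"

definition sample_ind :: "nat \<Rightarrow> nat \<Rightarrow> (nat \<Rightarrow> nat \<Rightarrow> real) \<Rightarrow> (nat \<Rightarrow> nat) pmf" where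
  "sample_ind r n p = Pi_pmf {..<n} 0 (\<lambda>i. embed_pmf (\<lambda>j. if j < r then p i j else 0))"

definition rcga_step :: "nat \<Rightarrow> nat \<Rightarrow> real \<Rightarrow> (nat \<Rightarrow> nat \<Rightarrow> real) \<Rightarrow> (nat \<Rightarrow> nat \<Rightarrow> real) pmf" where
  "rcga_step r n K p =
     do { x \<leftarrow> sample_ind r n p;
          y \<leftarrow> sample_ind r n p;
          let (x', y') = (if r_onemax r n x < r_onemax r n y then (y, x) else (x, y));
          return_pmf (\<lambda>i j. p i j + (1 / K) * ((if x' i = j then 1 else 0) - (if y' i = j then 1 else 0))) }"

end

theory Submission
  imports Defs
begin


lemma card_window:
  fixes W :: "nat set" and \<mu> u :: real
  assumes "finite W" "\<And>s. s \<in> W \<Longrightarrow> \<bar>real s - \<mu>\<bar> \<le> u" "u \<ge> 0"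
  shows "real (card W) \<le> 2 * u + 1"
proof (cases "W = {}")
  case True
  then show ?thesis using assms by auto
next
  case False
  have "W \<subseteq> {Min W..Max W}" using assms(1) by auto
  hence "card W \<le> card {Min W..Max W}" by (intro card_mono) auto
  also have "\<dots> = Max W + 1 - Min W" by simp
  finally have c: "card W \<le> Max W + 1 - Min W" .
  have mW: "Min W \<in> W" "Max W \<in> W" using False assms(1) by auto
  have le: "Min W \<le> Max W" using False assms(1) by auto
  have "real (Max W) - real (Min W) \<le> 2 * u"
    using assms(2)[OF mW(1)] assms(2)[OF mW(2)] by linarith
  thus ?thesis using c le by (simp add: of_nat_diff)
qed

lemma anti_conc:
  fixes \<pi> :: "nat \<Rightarrow> real" and \<mu> V :: real and N :: nat
  assumes nn: "\<And>s. \<pi> s \<ge> 0" and s1: "(\<Sum>s\<le>N. \<pi> s) = 1"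
    and var: "(\<Sum>s\<le>N. \<pi> s * (real s - \<mu>)^2) = V"
  shows "(\<Sum>s\<le>N. (\<pi> s)^2) \<ge> 4 / (9 * (2 * sqrt (3 * V) + 1))"
proof -
  have V0: "V \<ge> 0" unfolding var[symmetric] by (intro sum_nonneg mult_nonneg_nonneg nn zero_le_power2)
  have key: "(\<Sum>s\<le>N. (\<pi> s)^2) \<ge> (1 - V / u^2)^2 / (2 * u + 1)" if u: "u > 0" "V / u^2 \<le> 1" for u
  proof -
    define W where "W = {s\<in>{..N}. \<bar>real s - \<mu>\<bar> \<le> u}"
    have fW: "finite W" unfolding W_def by auto
    have out: "(\<Sum>s\<in>{..N} - W. \<pi> s) \<le> V / u^2"
    proof -
      have "(\<Sum>s\<in>{..N} - W. \<pi> s) * u^2 = (\<Sum>s\<in>{..N} - W. \<pi> s * u^2)"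
        by (simp add: sum_distrib_right)
      also have "\<dots> \<le> (\<Sum>s\<in>{..N} - W. \<pi> s * (real s - \<mu>)^2)"
      proof (intro sum_mono mult_left_mono)
        fix s assume "s \<in> {..N} - W"
        hence "\<bar>real s - \<mu>\<bar> > u" unfolding W_def by auto
        hence "u^2 \<le> \<bar>real s - \<mu>\<bar>^2" using u by (intro power_mono) auto
        thus "u^2 \<le> (real s - \<mu>)^2" by simp
      qed (use nn in auto)
      also have "\<dots> \<le> (\<Sum>s\<le>N. \<pi> s * (real s - \<mu>)^2)"
        by (intro sum_mono2) (use nn in auto)
      finally show ?thesis using var u by (simp add: pos_le_divide_eq)
    qed
    have split: "(\<Sum>s\<le>N. \<pi> s) = (\<Sum>s\<in>W. \<pi> s) + (\<Sum>s\<in>{..N} - W. \<pi> s)"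
      by (subst sum.subset_diff[of W]) (auto simp: W_def)
    have inW: "(\<Sum>s\<in>W. \<pi> s) \<ge> 1 - V / u^2" using split s1 out by linarith
    have cW: "real (card W) \<le> 2 * u + 1"
      by (rule card_window[OF fW]) (use u in \<open>auto simp: W_def\<close>)
    have "(1 - V / u^2)^2 \<le> (\<Sum>s\<in>W. \<pi> s)^2"
      using inW u by (intro power_mono) auto
    also have "\<dots> \<le> (\<Sum>s\<in>W. (\<pi> s)^2) * card W" by (rule sum_squared_le_sum_of_squares)
    also have "\<dots> \<le> (\<Sum>s\<le>N. (\<pi> s)^2) * (2 * u + 1)"
      by (intro mult_mono sum_mono2 cW) (auto simp: W_def sum_nonneg)
    finally have fin: "(1 - V / u^2)^2 \<le> (\<Sum>s\<le>N. (\<pi> s)^2) * (2 * u + 1)" .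
    have pos: "2 * u + 1 > 0" using u by simp
    show ?thesis by (subst pos_divide_le_eq[OF pos]) (rule fin)
  qed
  show ?thesis
  proof (cases "V = 0")
    case True
    have "(\<Sum>s\<le>N. (\<pi> s)^2) \<ge> (1 - V / (1/2)^2)^2 / (2 * (1/2) + 1)"
      by (rule key) (use True in auto)
    then show ?thesis using True by simp
  next
    case False
    hence Vp: "V > 0" using V0 by auto
    define u where "u = sqrt (5 * V)"
    have u0: "u > 0" using Vp by (simp add: u_def)
    have u2: "u^2 = 5 * V" using Vp by (simp add: u_def)
    have h: "(\<Sum>s\<le>N. (\<pi> s)^2) \<ge> (1 - V / u^2)^2 / (2 * u + 1)"
      by (rule key[OF u0]) (use u2 Vp in simp)
    have vu: "V / u^2 = 1/5" using u2 Vp by simp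
    have e: "(1 - V / u^2)^2 = 16 / 25" unfolding vu by (simp add: power2_eq_square)
    have "200 * u \<le> 288 * sqrt (3 * V)"
    proof -
      have "(200 * u)^2 \<le> (288 * sqrt (3 * V))^2" using u2 Vp by (simp add: power_mult_distrib)
      thus ?thesis by (rule power2_le_imp_le) (use Vp in simp)
    qed
    hence ineq: "4 * (25 * (2 * u + 1)) \<le> 16 * (9 * (2 * sqrt (3 * V) + 1))" by (simp only: ring_distribs)
    have X0: "9 * (2 * sqrt (3 * V) + 1) > 0" using Vp by (simp add: add_nonneg_pos)
    have Y0: "2 * u + 1 > 0" using u0 by simp
    have "4 / (9 * (2 * sqrt (3 * V) + 1)) \<le> (16 / 25) / (2 * u + 1)"
      by (subst pos_le_divide_eq[OF Y0], subst times_divide_eq_left, subst pos_divide_le_eq[OF X0]) (use ineq in linarith)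
    then show ?thesis using h e by simp
  qed
qed



lemma exp_indicator_eq: "measure_pmf.expectation M (\<lambda>y. if y = c then 1 else 0 :: real) = pmf M c"
  by (subst integral_measure_pmf_real[of "{c}"]) (auto split: if_splits)

lemma exp_pair_mult:
  fixes g :: "'a \<Rightarrow> real" and h :: "'b \<Rightarrow> real"
  assumes "finite (set_pmf A)" "finite (set_pmf B)"
  shows "measure_pmf.expectation (pair_pmf A B) (\<lambda>z. g (fst z) * h (snd z)) =
         measure_pmf.expectation A g * measure_pmf.expectation B h"
proof -
  have "measure_pmf.expectation (pair_pmf A B) (\<lambda>z. g (fst z) * h (snd z)) =
        (\<Sum>x\<in>set_pmf A \<times> set_pmf B. (g (fst x) * h (snd x)) * pmf (pair_pmf A B) x)"
    by (rule integral_measure_pmf_real) (use assms in auto)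
  also have "\<dots> = (\<Sum>a\<in>set_pmf A. \<Sum>b\<in>set_pmf B. (g a * pmf A a) * (h b * pmf B b))"
    by (subst sum.cartesian_product) (auto simp: pmf_pair intro!: sum.cong)
  also have "\<dots> = (\<Sum>a\<in>set_pmf A. g a * pmf A a) * (\<Sum>b\<in>set_pmf B. h b * pmf B b)"
    by (simp add: sum_product)
  also have "\<dots> = measure_pmf.expectation A g * measure_pmf.expectation B h"
    by (subst (1 2) integral_measure_pmf_real) (use assms in auto)
  finally show ?thesis .
qed

lemma finite_set_Pi_pmf:
  assumes "finite A" "\<And>j. j \<in> A \<Longrightarrow> finite (set_pmf (P j))"
  shows "finite (set_pmf (Pi_pmf A d P))"
  using assms by (simp add: set_Pi_pmf) (intro finite_PiE_dflt, auto)

definition cnt :: "nat set \<Rightarrow> nat \<Rightarrow> (nat \<Rightarrow> nat) \<Rightarrow> nat" where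
  "cnt A c f = card {j\<in>A. f j = c}"

lemma cnt_upd:
  assumes "finite A" "x \<notin> A"
  shows "real (cnt (insert x A) c (f(x:=y))) = (if y = c then 1 else 0) + real (cnt A c f)"
proof -
  have e: "{j\<in>insert x A. (f(x:=y)) j = c} = (if y = c then insert x {j\<in>A. f j = c} else {j\<in>A. f j = c})"
    using assms by auto
  show ?thesis unfolding cnt_def e using assms by auto
qed

lemma mean_var_cnt:
  assumes "finite A" "\<And>j. j \<in> A \<Longrightarrow> finite (set_pmf (P j))"
  shows "measure_pmf.expectation (Pi_pmf A d P) (\<lambda>f. real (cnt A c f)) = (\<Sum>j\<in>A. pmf (P j) c)
       \<and> measure_pmf.expectation (Pi_pmf A d P) (\<lambda>f. (real (cnt A c f) - (\<Sum>j\<in>A. pmf (P j) c))^2)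
          = (\<Sum>j\<in>A. pmf (P j) c * (1 - pmf (P j) c))"
  using assms
proof (induction A rule: finite_induct)
  case empty
  then show ?case by (simp add: cnt_def)
next
  case (insert x A)
  define M where "M = Pi_pmf A d P"
  define w where "w = pmf (P x) c"
  define \<mu> where "\<mu> = (\<Sum>j\<in>A. pmf (P j) c)"
  have fM: "finite (set_pmf M)" unfolding M_def by (rule finite_set_Pi_pmf) (use insert in auto)
  have fP: "finite (set_pmf (P x))" using insert by auto
  have IH: "measure_pmf.expectation M (\<lambda>f. real (cnt A c f)) = \<mu>"
     "measure_pmf.expectation M (\<lambda>f. (real (cnt A c f) - \<mu>)^2) = (\<Sum>j\<in>A. pmf (P j) c * (1 - pmf (P j) c))"
    using insert by (auto simp: M_def \<mu>_def)
  have Pi: "Pi_pmf (insert x A) d P = map_pmf (\<lambda>(y,f). f(x:=y)) (pair_pmf (P x) M)"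
    unfolding M_def by (rule Pi_pmf_insert) (use insert in auto)
  have fpair: "finite (set_pmf (pair_pmf (P x) M))" using fM fP by simp
  have int: "integrable (measure_pmf (pair_pmf (P x) M)) g" for g :: "_ \<Rightarrow> real"
    by (rule integrable_measure_pmf_finite[OF fpair])
  have intM: "integrable (measure_pmf M) g" for g :: "_ \<Rightarrow> real"
    by (rule integrable_measure_pmf_finite[OF fM])
  have intP: "integrable (measure_pmf (P x)) g" for g :: "_ \<Rightarrow> real"
    by (rule integrable_measure_pmf_finite[OF fP])
  have sums: "(\<Sum>j\<in>insert x A. pmf (P j) c) = w + \<mu>" using insert by (simp add: w_def \<mu>_def)
  have mean: "measure_pmf.expectation (Pi_pmf (insert x A) d P) (\<lambda>f. real (cnt (insert x A) c f)) = w + \<mu>"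
  proof -
    have "measure_pmf.expectation (Pi_pmf (insert x A) d P) (\<lambda>f. real (cnt (insert x A) c f))
       = measure_pmf.expectation (pair_pmf (P x) M) (\<lambda>z. (if fst z = c then 1 else 0) + real (cnt A c (snd z)))"
      unfolding Pi using insert by (simp add: case_prod_beta cnt_upd)
    also have "\<dots> = measure_pmf.expectation (pair_pmf (P x) M) (\<lambda>z. (if fst z = c then 1 else 0))
                  + measure_pmf.expectation (pair_pmf (P x) M) (\<lambda>z. real (cnt A c (snd z)))"
      by (rule Bochner_Integration.integral_add) (rule int)+
    also have "\<dots> = w + \<mu>"
      using IH expectation_pair_pmf_fst[where f="\<lambda>y. if y = c then 1 else (0::real)" and p="P x" and q=M]
        expectation_pair_pmf_snd[where f="\<lambda>f. real (cnt A c f)" and p="P x" and q=M]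
      by (simp add: exp_indicator_eq w_def)
    finally show ?thesis .
  qed
  have var: "measure_pmf.expectation (Pi_pmf (insert x A) d P) (\<lambda>f. (real (cnt (insert x A) c f) - (w + \<mu>))^2)
       = w * (1 - w) + (\<Sum>j\<in>A. pmf (P j) c * (1 - pmf (P j) c))"
  proof -
    let ?Y = "\<lambda>y. (if y = c then 1 else 0) - w :: real"
    let ?Z = "\<lambda>f. real (cnt A c f) - \<mu>"
    have "measure_pmf.expectation (Pi_pmf (insert x A) d P) (\<lambda>f. (real (cnt (insert x A) c f) - (w + \<mu>))^2)
       = measure_pmf.expectation (pair_pmf (P x) M) (\<lambda>z. (?Y (fst z))^2 + 2 * (?Y (fst z) * ?Z (snd z)) + (?Z (snd z))^2)"
      unfolding Pi using insert
      by (simp add: case_prod_beta cnt_upd) (intro Bochner_Integration.integral_cong refl, simp add: power2_eq_square algebra_simps)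
    also have "\<dots> = measure_pmf.expectation (pair_pmf (P x) M) (\<lambda>z. (?Y (fst z))^2)
        + 2 * measure_pmf.expectation (pair_pmf (P x) M) (\<lambda>z. ?Y (fst z) * ?Z (snd z))
        + measure_pmf.expectation (pair_pmf (P x) M) (\<lambda>z. (?Z (snd z))^2)"
      by (simp add: int)
    also have "measure_pmf.expectation (pair_pmf (P x) M) (\<lambda>z. ?Y (fst z) * ?Z (snd z))
       = measure_pmf.expectation (P x) ?Y * measure_pmf.expectation M ?Z"
      by (rule exp_pair_mult[OF fP fM])
    also have "measure_pmf.expectation M ?Z = 0"
      using IH(1) by (simp add: intM prob_space_measure_pmf)
    also have "measure_pmf.expectation (pair_pmf (P x) M) (\<lambda>z. (?Y (fst z))^2) = measure_pmf.expectation (P x) (\<lambda>y. (?Y y)^2)"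
      by (rule expectation_pair_pmf_fst)
    also have "(\<lambda>y. (?Y y)^2) = (\<lambda>y. (1 - 2 * w) * (if y = c then 1 else 0) + w^2)"
      by (auto simp: power2_eq_square algebra_simps)
    also have "measure_pmf.expectation (P x) \<dots> = (1 - 2 * w) * w + w^2"
      by (simp add: intP exp_indicator_eq w_def)
    also have "measure_pmf.expectation (pair_pmf (P x) M) (\<lambda>z. (?Z (snd z))^2) = (\<Sum>j\<in>A. pmf (P j) c * (1 - pmf (P j) c))"
      using IH(2) expectation_pair_pmf_snd[where f="\<lambda>f. (?Z f)^2" and p="P x" and q=M] by simp
    finally show ?thesis by (simp add: power2_eq_square algebra_simps)
  qed
  show ?case using mean var sums insert by (simp add: w_def)
qed



lemma cnt_upd_nat:
  assumes "finite A" "x \<notin> A"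
  shows "cnt (insert x A) c (f(x:=y)) = (if y = c then 1 else 0) + cnt A c f"
proof -
  have e: "{j\<in>insert x A. (f(x:=y)) j = c} = (if y = c then insert x {j\<in>A. f j = c} else {j\<in>A. f j = c})"
    using assms by auto
  show ?thesis unfolding cnt_def e using assms by auto
qed

lemma pmf_P:
  assumes "valid_freqs r n p" "j < n"
  shows "pmf (embed_pmf (\<lambda>v. if v < r then p j v else 0)) v = (if v < r then p j v else 0)"
proof -
  have nn: "\<And>x. 0 \<le> (if x < r then p j x else 0)" using assms unfolding valid_freqs_def by auto
  have "(\<integral>\<^sup>+x. ennreal (if x < r then p j x else 0) \<partial>count_space UNIV) = (\<Sum>x\<in>{..<r}. ennreal (if x < r then p j x else 0))"
    by (rule nn_integral_count_space') auto
  also have "\<dots> = (\<Sum>x\<in>{..<r}. ennreal (p j x))" by simp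
  also have "\<dots> = ennreal (\<Sum>x\<in>{..<r}. p j x)" using nn by (subst sum_ennreal) (auto, metis)
  also have "\<dots> = 1" using assms unfolding valid_freqs_def by auto
  finally show ?thesis using nn by (subst pmf_embed_pmf) auto
qed



lemma sum_bool_prod:
  fixes G :: "bool \<times> 'b \<Rightarrow> real"
  shows "(\<Sum>w\<in>UNIV \<times> N. G w) = (\<Sum>s\<in>N. G (False, s) + G (True, s))"
proof -
  have "(\<Sum>w\<in>UNIV \<times> N. G w) = (\<Sum>a\<in>UNIV. \<Sum>b\<in>N. G (a, b))"
    by (simp add: sum.cartesian_product)
  also have "\<dots> = (\<Sum>b\<in>N. G (False, b)) + (\<Sum>b\<in>N. G (True, b))" by (simp add: UNIV_bool)
  also have "\<dots> = (\<Sum>s\<in>N. G (False, s) + G (True, s))" by (simp add: sum.distrib)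
  finally show ?thesis .
qed

theorem lemma3:
  fixes n r :: nat and K :: real and p :: "nat \<Rightarrow> nat \<Rightarrow> real" and i :: nat
  assumes "n \<ge> 1" and "r \<ge> 2" and "K > 0"
    and "valid_freqs r n p"
    and "i < n"
    and "1 / K \<le> p i (r - 1)" and "p i (r - 1) \<le> 1 - 1 / K"
  shows "measure_pmf.expectation (rcga_step r n K p) (\<lambda>q. q i (r - 1) - p i (r - 1))
         \<ge> 8 * p i (r - 1) * (1 - p i (r - 1)) /
           (9 * K * (2 * sqrt (3 * (\<Sum>j\<in>{..<n} - {i}. p j (r - 1) * (1 - p j (r - 1)))) + 1))"
proof -
  define P where "P = (\<lambda>j. embed_pmf (\<lambda>v. if v < r then p j v else 0))"
  define A where "A = {..<n} - {i}"
  define R where "R = Pi_pmf A 0 P"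
  define D where "D = pair_pmf (P i) R"
  define c where "c = r - 1"
  define q where "q = p i c"
  define upd :: "nat \<times> (nat \<Rightarrow> nat) \<Rightarrow> (nat \<Rightarrow> nat)" where "upd = (\<lambda>(y,f). f(i:=y))"
  have cr: "c < r" using assms by (simp add: c_def)
  have pmfP: "\<And>j v. j < n \<Longrightarrow> pmf (P j) v = (if v < r then p j v else 0)"
    unfolding P_def by (rule pmf_P[OF assms(4)])
  have finP: "finite (set_pmf (P j))" if "j < n" for j
  proof (rule finite_subset[of _ "{..<r}"])
    show "set_pmf (P j) \<subseteq> {..<r}" using pmfP[OF that] by (auto simp: set_pmf_eq)
  qed auto
  have finA: "finite A" and iA: "i \<notin> A" and ins: "{..<n} = insert i A" and An: "A \<subseteq> {..<n}"
    using assms(5) by (auto simp: A_def)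
  have cardA: "card A \<le> n" using An by (metis card_lessThan card_mono finite_lessThan)
  have finR: "finite (set_pmf R)" unfolding R_def
    by (rule finite_set_Pi_pmf[OF finA]) (use An finP in auto)
  have X: "sample_ind r n p = map_pmf upd D"
    unfolding sample_ind_def D_def R_def upd_def P_def[symmetric] ins
    by (rule Pi_pmf_insert[OF finA iA])
  have ro: "r_onemax r n (f(i:=a)) = (if a = c then 1 else 0) + cnt A c f" for a f
  proof -
    have "r_onemax r n (f(i:=a)) = cnt {..<n} c (f(i:=a))" by (simp add: r_onemax_def cnt_def c_def)
    also have "\<dots> = (if a = c then 1 else 0) + cnt A c f" unfolding ins by (rule cnt_upd_nat[OF finA iA])
    finally show ?thesis .
  qed
  define H where "H = (\<lambda>x y. (\<lambda>(x', y'). (\<lambda>i j. p i j + (1 / K) * ((if x' i = j then 1 else 0) - (if y' i = j then 1 else 0))))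
        (if r_onemax r n x < r_onemax r n y then (y, x) else (x, y)))"
  have step: "rcga_step r n K p = map_pmf (\<lambda>(x,y). H x y) (pair_pmf (sample_ind r n p) (sample_ind r n p))"
  proof -
    have "rcga_step r n K p = bind_pmf (sample_ind r n p) (\<lambda>x. bind_pmf (sample_ind r n p) (\<lambda>y. return_pmf (H x y)))"
      unfolding rcga_step_def H_def Let_def by (simp only: prod.case_distrib)
    also have "\<dots> = map_pmf (\<lambda>(x,y). H x y) (pair_pmf (sample_ind r n p) (sample_ind r n p))"
      unfolding pair_pmf_def by (simp add: map_bind_pmf)
    finally show ?thesis .
  qed

  define Psi :: "bool \<times> nat \<Rightarrow> bool \<times> nat \<Rightarrow> real" where
    "Psi = (\<lambda>(\<alpha>,s) (\<beta>,t). if (if \<alpha> then 1 else 0) + s < (if \<beta> then 1 else 0) + (t::nat)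
        then (if \<beta> then 1 else 0) - (if \<alpha> then 1 else 0) else (if \<alpha> then 1 else 0) - (if \<beta> then 1 else 0))"
  define \<phi> :: "nat \<times> (nat \<Rightarrow> nat) \<Rightarrow> bool \<times> nat" where "\<phi> = (\<lambda>(a, f). (a = c, cnt A c f))"
  have Hx: "H x y i c - p i c = (1/K) * (if r_onemax r n x < r_onemax r n y then (if y i = c then 1 else 0) - (if x i = c then 1 else 0) else (if x i = c then 1 else 0) - (if y i = c then 1 else 0))" for x y
    unfolding H_def by (cases "r_onemax r n x < r_onemax r n y") (simp_all only: if_True if_False prod.case)
  have pw: "H (upd d1) (upd d2) i c - p i c = (1/K) * Psi (\<phi> d1) (\<phi> d2)" for d1 d2
  proof -
    obtain a f where d1: "d1 = (a,f)" by (cases d1)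
    obtain b g where d2: "d2 = (b,g)" by (cases d2)
    show ?thesis unfolding d1 d2 upd_def \<phi>_def Psi_def prod.case Hx ro fun_upd_same
      by (rule refl)
  qed
  have pairX: "pair_pmf (sample_ind r n p) (sample_ind r n p) = map_pmf (\<lambda>(a,b). (upd a, upd b)) (pair_pmf D D)"
    unfolding X by (rule map_pair[symmetric])
  have E1: "measure_pmf.expectation (rcga_step r n K p) (\<lambda>q. q i (r - 1) - p i (r - 1))
      = measure_pmf.expectation (pair_pmf D D) (\<lambda>z. (1/K) * Psi (\<phi> (fst z)) (\<phi> (snd z)))"
    unfolding step pairX map_pmf_comp integral_map_pmf c_def[symmetric]
    by (intro Bochner_Integration.integral_cong refl) (simp add: case_prod_beta pw)
  define Bq where "Bq = map_pmf (\<lambda>a. a = c) (P i)"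
  define \<sigma> where "\<sigma> = map_pmf (cnt A c) R"
  define Q where "Q = pair_pmf Bq \<sigma>"
  have mapD: "map_pmf \<phi> D = Q"
  proof -
    have e: "\<phi> = (\<lambda>(a, b). ((\<lambda>a. a = c) a, cnt A c b))" by (simp add: \<phi>_def)
    show ?thesis unfolding D_def Q_def Bq_def \<sigma>_def e by (rule map_pair)
  qed
  have mapDD: "map_pmf (\<lambda>z. (\<phi> (fst z), \<phi> (snd z))) (pair_pmf D D) = pair_pmf Q Q"
  proof -
    have e: "(\<lambda>z. (\<phi> (fst z), \<phi> (snd z))) = (\<lambda>(a, b). (\<phi> a, \<phi> b))" by auto
    show ?thesis unfolding e mapD[symmetric] by (rule map_pair)
  qed
  have E2: "measure_pmf.expectation (pair_pmf D D) (\<lambda>z. (1/K) * Psi (\<phi> (fst z)) (\<phi> (snd z)))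
     = (1/K) * measure_pmf.expectation (pair_pmf Q Q) (\<lambda>w. Psi (fst w) (snd w))"
    unfolding mapDD[symmetric] integral_map_pmf by (simp only: fst_conv snd_conv integral_mult_right_zero)

  have q01: "0 \<le> q" "q \<le> 1"
  proof -
    have "0 < 1 / K" using assms(3) by simp
    thus "0 \<le> q" using assms(6) unfolding q_def c_def by linarith
    have "0 < 1 / K" using assms(3) by simp
    thus "q \<le> 1" using assms(7) unfolding q_def c_def by linarith
  qed
  have pBT: "pmf Bq True = q"
  proof -
    have v: "(\<lambda>a. a = c) -` {True} = {c}" by auto
    show ?thesis unfolding Bq_def pmf_map v measure_pmf_single
      using pmfP[OF assms(5)] cr by (simp add: q_def)
  qed
  have pBF: "pmf Bq False = 1 - q"
  proof -
    have "set_pmf Bq \<subseteq> {False, True}" by auto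
    thus ?thesis using sum_pmf_eq_1[of "UNIV :: bool set" Bq] pBT by (simp add: UNIV_bool)
  qed
  have setS: "set_pmf \<sigma> \<subseteq> {..n}"
  proof
    fix s assume "s \<in> set_pmf \<sigma>"
    then obtain f where "s = cnt A c f" unfolding \<sigma>_def by auto
    moreover have "cnt A c f \<le> card A" unfolding cnt_def using finA by (intro card_mono) auto
    ultimately show "s \<in> {..n}" using cardA by auto
  qed
  have pQ: "pmf Q (\<alpha>, s) = pmf Bq \<alpha> * pmf \<sigma> s" for \<alpha> s unfolding Q_def by (rule pmf_pair)
  have E3: "measure_pmf.expectation (pair_pmf Q Q) (\<lambda>w. Psi (fst w) (snd w))
      = (\<Sum>w\<in>(UNIV \<times> {..n}) \<times> (UNIV \<times> {..n}). Psi (fst w) (snd w) * pmf (pair_pmf Q Q) w)"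
    by (rule integral_measure_pmf_real) (use setS in \<open>auto simp: Q_def\<close>)
  also have "\<dots> = (\<Sum>w1\<in>UNIV \<times> {..n}. \<Sum>w2\<in>UNIV \<times> {..n}. Psi w1 w2 * (pmf Q w1 * pmf Q w2))"
    by (simp add: sum.cartesian_product case_prod_beta) (intro sum.cong refl, metis pmf_pair prod.collapse)
  also have "\<dots> = (\<Sum>s\<le>n. \<Sum>t\<le>n. q * (1 - q) * (pmf \<sigma> s * pmf \<sigma> t) * (Psi (True, s) (False, t) + Psi (False, s) (True, t)))"
  proof -
    have PTT: "Psi (\<alpha>, s) (\<alpha>, t) = 0" for \<alpha> s t by (simp add: Psi_def)
    have "(\<Sum>w1\<in>UNIV \<times> {..n}. \<Sum>w2\<in>UNIV \<times> {..n}. Psi w1 w2 * (pmf Q w1 * pmf Q w2))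
        = (\<Sum>s\<le>n. (\<Sum>w2\<in>UNIV \<times> {..n}. Psi (False, s) w2 * (pmf Q (False, s) * pmf Q w2))
                + (\<Sum>w2\<in>UNIV \<times> {..n}. Psi (True, s) w2 * (pmf Q (True, s) * pmf Q w2)))"
      by (rule sum_bool_prod)
    also have "\<dots> = (\<Sum>s\<le>n. (\<Sum>t\<le>n. (Psi (False, s) (False, t) * (pmf Q (False, s) * pmf Q (False, t))
                 + Psi (False, s) (True, t) * (pmf Q (False, s) * pmf Q (True, t))))
          + (\<Sum>t\<le>n. (Psi (True, s) (False, t) * (pmf Q (True, s) * pmf Q (False, t))
                 + Psi (True, s) (True, t) * (pmf Q (True, s) * pmf Q (True, t)))))"
      by (simp only: sum_bool_prod)
    also have "\<dots> = (\<Sum>s\<le>n. \<Sum>t\<le>n. q * (1 - q) * (pmf \<sigma> s * pmf \<sigma> t) * (Psi (True, s) (False, t) + Psi (False, s) (True, t)))"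
      by (simp only: sum.distrib[symmetric], intro sum.cong refl) (simp add: PTT pQ pBT pBF algebra_simps)
    finally show ?thesis .
  qed
  finally have E3: "measure_pmf.expectation (pair_pmf Q Q) (\<lambda>w. Psi (fst w) (snd w))
      = (\<Sum>s\<le>n. \<Sum>t\<le>n. q * (1 - q) * (pmf \<sigma> s * pmf \<sigma> t) * (Psi (True, s) (False, t) + Psi (False, s) (True, t)))" .
  have E4: "(\<Sum>s\<le>n. \<Sum>t\<le>n. q * (1 - q) * (pmf \<sigma> s * pmf \<sigma> t) * (Psi (True, s) (False, t) + Psi (False, s) (True, t)))
     \<ge> (\<Sum>s\<le>n. \<Sum>t\<le>n. q * (1 - q) * (pmf \<sigma> s * pmf \<sigma> t) * (if s = t then 2 else 0))"
  proof (intro sum_mono mult_left_mono)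
    fix s t
    show "(if s = t then 2 else 0) \<le> Psi (True, s) (False, t) + Psi (False, s) (True, t)"
      by (auto simp: Psi_def)
    show "0 \<le> q * (1 - q) * (pmf \<sigma> s * pmf \<sigma> t)" using q01 by simp
  qed
  have E5: "(\<Sum>s\<le>n. \<Sum>t\<le>n. q * (1 - q) * (pmf \<sigma> s * pmf \<sigma> t) * (if s = t then 2 else 0))
      = 2 * q * (1 - q) * (\<Sum>s\<le>n. (pmf \<sigma> s)^2)"
  proof -
    have "(\<Sum>t\<le>n. q * (1 - q) * (pmf \<sigma> s * pmf \<sigma> t) * (if s = t then 2 else 0)) = 2 * q * (1 - q) * (pmf \<sigma> s)^2"
      if "s \<le> n" for s
    proof -
      have "(\<Sum>t\<le>n. q * (1 - q) * (pmf \<sigma> s * pmf \<sigma> t) * (if s = t then 2 else 0))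
          = (\<Sum>t\<le>n. if s = t then q * (1 - q) * (pmf \<sigma> s * pmf \<sigma> t) * 2 else 0)"
        by (intro sum.cong) auto
      also have "\<dots> = q * (1 - q) * (pmf \<sigma> s * pmf \<sigma> s) * 2" using that by (simp add: sum.delta sum.delta')
      finally show ?thesis by (simp add: power2_eq_square)
    qed
    hence "(\<Sum>s\<le>n. \<Sum>t\<le>n. q * (1 - q) * (pmf \<sigma> s * pmf \<sigma> t) * (if s = t then 2 else 0))
        = (\<Sum>s\<le>n. 2 * q * (1 - q) * (pmf \<sigma> s)^2)" by (intro sum.cong) auto
    thus ?thesis by (simp add: sum_distrib_left)
  qed
  define V where "V = (\<Sum>j\<in>{..<n} - {i}. p j (r - 1) * (1 - p j (r - 1)))"
  define \<mu> where "\<mu> = (\<Sum>j\<in>A. pmf (P j) c)"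
  have s1: "(\<Sum>s\<le>n. pmf \<sigma> s) = 1" by (rule sum_pmf_eq_1[OF _ setS]) auto
  have var: "(\<Sum>s\<le>n. pmf \<sigma> s * (real s - \<mu>)^2) = V"
  proof -
    have "(\<Sum>s\<le>n. pmf \<sigma> s * (real s - \<mu>)^2) = (\<Sum>s\<in>{..n}. (real s - \<mu>)^2 * pmf \<sigma> s)"
      by (simp add: mult.commute)
    also have "\<dots> = measure_pmf.expectation \<sigma> (\<lambda>s. (real s - \<mu>)^2)"
      by (rule integral_measure_pmf_real[symmetric]) (use setS in auto)
    also have "\<dots> = measure_pmf.expectation R (\<lambda>f. (real (cnt A c f) - \<mu>)^2)"
      unfolding \<sigma>_def by simp
    also have "\<dots> = (\<Sum>j\<in>A. pmf (P j) c * (1 - pmf (P j) c))"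
      unfolding R_def \<mu>_def by (rule conjunct2[OF mean_var_cnt[OF finA]]) (use An finP in auto)
    also have "\<dots> = V" unfolding V_def A_def[symmetric] c_def[symmetric]
      by (intro sum.cong refl) (use An pmfP cr in auto)
    finally show ?thesis .
  qed
  have AC: "(\<Sum>s\<le>n. (pmf \<sigma> s)^2) \<ge> 4 / (9 * (2 * sqrt (3 * V) + 1))"
    by (rule anti_conc[OF _ s1 var]) simp
  have "measure_pmf.expectation (rcga_step r n K p) (\<lambda>q. q i (r - 1) - p i (r - 1))
      = (1/K) * (\<Sum>s\<le>n. \<Sum>t\<le>n. q * (1 - q) * (pmf \<sigma> s * pmf \<sigma> t) * (Psi (True, s) (False, t) + Psi (False, s) (True, t)))"
    using E1 E2 E3 by simp
  also have "\<dots> \<ge> (1/K) * (2 * q * (1 - q) * (4 / (9 * (2 * sqrt (3 * V) + 1))))"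
  proof (intro mult_left_mono)
    show "2 * q * (1 - q) * (4 / (9 * (2 * sqrt (3 * V) + 1))) \<le> (\<Sum>s\<le>n. \<Sum>t\<le>n. q * (1 - q) * (pmf \<sigma> s * pmf \<sigma> t) * (Psi (True, s) (False, t) + Psi (False, s) (True, t)))"
    proof -
      have "2 * q * (1 - q) * (4 / (9 * (2 * sqrt (3 * V) + 1))) \<le> 2 * q * (1 - q) * (\<Sum>s\<le>n. (pmf \<sigma> s)^2)"
        using AC q01 by (intro mult_left_mono) auto
      thus ?thesis using E4 E5 by linarith
    qed
  qed (use assms(3) in simp)
  finally show ?thesis unfolding V_def q_def c_def using assms(3) by (simp add: field_simps)
qed

end
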